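(* Let $A:\mathbb{R}\to\mathbb{R}^{n\times n}$, $t\mapsto A(t)=(a_{kl}(t))$, be a bounded and piecewise continuous function such that for every $t$ the matrix $A(t)$ is Metzler with zero row sums. Consider the linear system $\dot{x}=A(t)x$. Suppose there exist an index $k\in\{1,\dots,n\}$, a threshold $\delta>0$ and an interval length $T>0$ such that for every $t\in\mathbb{R}$, in the $\delta$-digraph associated to the matrix $\int_t^{t+T}A(s)\,\mathrm{d}s$, every node $l\neq k$ can be reached from node $k$. Then the equilibrium set of consensus states $E=\{x\in\mathbb{R}^n: x_1=\dots=x_n\}$ is uniformly exponentially stable for $\dot{x}=A(t)x$. In particular, all components of any solution $\zeta(t)$ of $\dot{x}=A(t)x$ converge to a common value as $t\to\infty$.
   Context: A real square matrix is Metzler if all its off-diagonal entries are nonnegative; it has zero row sums if each of its rows sums to zero (note that the integral over $[t,t+T]$ of such matrices is again Metzler with zero row sums). For $\delta\ge 0$, the $\delta$-digraph associated to an $n\times n$ Metzler matrix $M=(m_{kl})$ with zero row sums is the directed graph with node set $\{1,\dots,n\}$ having an arc from node $l$ to node $k$ ($k\neq l$) if and only if $m_{kl}>\delta$. A node $l$ can be reached from a node $k\neq l$ if there is a directed path from $k$ to $l$ respecting the orientation of the arcs. Uniform exponential stability of $E$ means: there exist constants $c,\lambda>0$ such that for every $t_0\in\mathbb{R}$ and every solution $\zeta$, $\mathrm{dist}(\zeta(t),E)\le c\,e^{-\lambda(t-t_0)}\mathrm{dist}(\zeta(t_0),E)$ for all $t\ge t_0$. *)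

theory Defs
  imports "HOL-Analysis.Analysis"
begin

text \<open>Matrices are real^'n^'n; entry (k,l) is M$k$l (row k, column l).\<close>

definition metzler :: "real^'n^'n \<Rightarrow> bool" where
  "metzler M \<longleftrightarrow> (\<forall>k l. k \<noteq> l \<longrightarrow> M$k$l \<ge> 0)"

definition zero_row_sums :: "real^'n^'n \<Rightarrow> bool" where
  "zero_row_sums M \<longleftrightarrow> (\<forall>k. (\<Sum>l\<in>UNIV. M$k$l) = 0)"

text \<open>Arcs of the delta-digraph: a pair (l,k) is an arc from l to k iff k \<noteq> l and m_kl > delta.\<close>
definition delta_digraph :: "real^'n^'n \<Rightarrow> real \<Rightarrow> ('n \<times> 'n) set" where
  "delta_digraph M \<delta> = {(l, k). k \<noteq> l \<and> M$k$l > \<delta>}"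

definition reachable :: "('n \<times> 'n) set \<Rightarrow> 'n \<Rightarrow> 'n \<Rightarrow> bool" where
  "reachable G k l \<longleftrightarrow> (k, l) \<in> G\<^sup>+"

definition piecewise_continuous :: "(real \<Rightarrow> 'a::topological_space) \<Rightarrow> bool" where
  "piecewise_continuous f \<longleftrightarrow>
     (\<forall>a b. \<exists>S. finite S \<and> (\<forall>t\<in>{a..b} - S. isCont f t) \<and>
        (\<forall>s\<in>S. (\<exists>L. (f \<longlongrightarrow> L) (at_left s)) \<and> (\<exists>R. (f \<longlongrightarrow> R) (at_right s))))"

text \<open>Solution of x' = A(t) x on [t0, \<infinity>) (Caratheodory sense, integral form).\<close>
definition is_solution :: "(real \<Rightarrow> real^'n^'n) \<Rightarrow> real \<Rightarrow> (real \<Rightarrow> real^'n) \<Rightarrow> bool" where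
  "is_solution A t0 \<zeta> \<longleftrightarrow>
     (\<forall>t\<ge>t0. ((\<lambda>s. A s *v \<zeta> s) has_integral (\<zeta> t - \<zeta> t0)) {t0..t})"

definition consensus_set :: "(real^'n) set" where
  "consensus_set = {x. \<forall>i j. x$i = x$j}"

definition unif_exp_stable :: "(real \<Rightarrow> real^'n^'n) \<Rightarrow> (real^'n) set \<Rightarrow> bool" where
  "unif_exp_stable A E \<longleftrightarrow>
     (\<exists>c r. c > 0 \<and> r > 0 \<and>
        (\<forall>t0 \<zeta>. is_solution A t0 \<zeta> \<longrightarrow>
           (\<forall>t\<ge>t0. infdist (\<zeta> t) E \<le> c * exp (- r * (t - t0)) * infdist (\<zeta> t0) E)))"

end

theory Submission
  imports Defs "HOL-Real_Asymp.Real_Asymp"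
begin

lemma cont_mv:
  fixes A :: "real \<Rightarrow> real^'n^'n"
  assumes "isCont A x" "isCont y x"
  shows "isCont (\<lambda>s. A s *v y s) x"
  unfolding matrix_vector_mult_def isCont_def
  by (intro tendsto_intros) (use assms in \<open>auto simp: isCont_def[symmetric]\<close>)

definition intrep :: "(real \<Rightarrow> real^'n) \<Rightarrow> real \<Rightarrow> (real \<Rightarrow> real^'n) \<Rightarrow> bool" where
  "intrep f s w \<longleftrightarrow> (\<forall>t\<ge>s. (f has_integral (w t - w s)) {s..t})"

lemma intrep_shift:
  assumes "intrep f s w" "s \<le> s'"
  shows "intrep f s' w"
  unfolding intrep_def
proof (intro allI impI)
  fix t assume t: "s' \<le> t"
  have h1: "(f has_integral (w t - w s)) {s..t}" using assms t unfolding intrep_def by auto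
  have h2: "(f has_integral (w s' - w s)) {s..s'}" using assms t unfolding intrep_def by auto
  have "f integrable_on {s'..t}" using h1 integrable_subinterval_real[of f s t s' t] assms(2)
    by (auto simp: has_integral_integrable)
  then obtain J where J: "(f has_integral J) {s'..t}" by auto
  have "(f has_integral ((w s' - w s) + J)) {s..t}"
    using has_integral_combine[OF assms(2) t h2 J] .
  with h1 have "w t - w s = (w s' - w s) + J" using has_integral_unique by blast
  then have "J = w t - w s'" by (simp add: algebra_simps)
  with J show "(f has_integral (w t - w s')) {s'..t}" by simp
qed

lemma intrep_cont:
  assumes "intrep f s w"
  shows "continuous_on {s..b} w"
proof (cases "s \<le> b")
  case True
  have "f integrable_on {s..b}" using assms True unfolding intrep_def by blast
  then have c: "continuous_on {s..b} (\<lambda>x. w s + integral {s..x} f)"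
    by (intro continuous_intros indefinite_integral_continuous_1)
  show ?thesis
  proof (rule continuous_on_eq[OF c])
    fix x assume "x \<in> {s..b}"
    then have "(f has_integral (w x - w s)) {s..x}" using assms unfolding intrep_def by auto
    then show "w s + integral {s..x} f = w x" by (simp add: integral_unique)
  qed
next
  case False then show ?thesis by simp
qed

lemma intrep_comp:
  assumes "intrep f s w" "t \<ge> s"
  shows "((\<lambda>x. f x $ i) has_integral (w t $ i - w s $ i)) {s..t}"
proof -
  have "(f has_integral (w t - w s)) {s..t}" using assms unfolding intrep_def by auto
  from has_integral_linear[OF this bounded_linear_vec_nth[of i]] show ?thesis by (simp add: o_def)
qed

lemma intrep_exp:
  fixes A :: "real \<Rightarrow> real^'n^'n"
  assumes pc: "piecewise_continuous A"
    and sol: "intrep (\<lambda>x. A x *v y x) s y"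
  shows "intrep (\<lambda>x. A x *v (exp (a * (x - s)) *\<^sub>R y x) + a *\<^sub>R (exp (a * (x - s)) *\<^sub>R y x)) s
           (\<lambda>x. exp (a * (x - s)) *\<^sub>R y x)"
  unfolding intrep_def
proof (intro allI impI)
  fix b assume sb: "s \<le> b"
  let ?g = "\<lambda>x. A x *v y x"
  let ?w = "\<lambda>x. exp (a * (x - s)) *\<^sub>R y x"
  obtain S where S: "finite S" "\<forall>t\<in>{s..b} - S. isCont A t"
    using pc unfolding piecewise_continuous_def by blast
  have yc: "continuous_on {s..b} y" using intrep_cont[OF sol] .
  have gi: "?g integrable_on {s..b}" using sol sb unfolding intrep_def by blast
  have wc: "continuous_on {s..b} ?w"
    by (intro continuous_intros yc)
  show "((\<lambda>x. A x *v ?w x + a *\<^sub>R ?w x) has_integral (?w b - ?w s)) {s..b}"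
  proof (rule fundamental_theorem_of_calculus_interior_strong[OF S(1) sb _ wc])
    fix x assume x: "x \<in> {s<..<b} - S"
    have Ac: "isCont A x" using S(2) x by auto
    have yx: "isCont y x"
      using continuous_on_interior[OF yc] x by auto
    have gx: "isCont ?g x" by (rule cont_mv[OF Ac yx])
    have d1: "((\<lambda>u. integral {s..u} ?g) has_vector_derivative ?g x) (at x within ({s..b} - {}))"
      by (rule integral_has_vector_derivative_continuous_at[OF gi])
         (use x gx in \<open>auto simp: continuous_at_imp_continuous_at_within\<close>)
    have d2: "((\<lambda>u. integral {s..u} ?g) has_vector_derivative ?g x) (at x)"
    proof -
      have "((\<lambda>u. integral {s..u} ?g) has_vector_derivative ?g x) (at x within {s<..<b})"
        using d1 by (rule has_vector_derivative_within_subset) auto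
      then show ?thesis using has_vector_derivative_within_open[of x "{s<..<b}"] x by auto
    qed
    have d3: "((\<lambda>u. y s + integral {s..u} ?g) has_vector_derivative ?g x) (at x)"
      using has_vector_derivative_add[OF has_vector_derivative_const d2] by simp
    have d4: "(y has_vector_derivative ?g x) (at x)"
    proof (rule has_vector_derivative_transform_within_open[OF d3, of "{s<..<b}"])
      fix u assume u: "u \<in> {s<..<b}"
      then have "(?g has_integral (y u - y s)) {s..u}" using sol unfolding intrep_def by auto
      then show "y s + integral {s..u} ?g = y u" by (simp add: integral_unique)
    qed (use x in auto)
    have d5: "((\<lambda>u. exp (a * (u - s))) has_field_derivative (a * exp (a * (x - s)))) (at x)"
      by (auto intro!: derivative_eq_intros)
    have "(?w has_vector_derivative (exp (a * (x - s)) *\<^sub>R ?g x + (a * exp (a * (x - s))) *\<^sub>R y x)) (at x)"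
      by (rule has_vector_derivative_scaleR[OF d5 d4])
    moreover have "exp (a * (x - s)) *\<^sub>R ?g x + (a * exp (a * (x - s))) *\<^sub>R y x
         = A x *v ?w x + a *\<^sub>R ?w x"
      by (simp add: scaleR_matrix_vector_assoc algebra_simps)
    ultimately show "(?w has_vector_derivative (A x *v ?w x + a *\<^sub>R ?w x)) (at x)" by simp
  qed
qed

locale cons_sys =
  fixes A :: "real \<Rightarrow> real^'n^'n" and \<alpha> :: real
  assumes metzA: "\<And>t. metzler (A t)" and zrsA: "\<And>t. zero_row_sums (A t)"
    and bndA: "\<And>t i j. \<bar>A t $ i $ j\<bar> \<le> \<alpha>" and apos: "\<alpha> > 0"

context cons_sys
begin

lemma F_mono:
  assumes "\<And>l. z $ l \<le> x $ l"
  shows "(A t *v z + \<alpha> *\<^sub>R z) $ i \<le> (A t *v x + \<alpha> *\<^sub>R x) $ i"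
proof -
  have e1: "(\<Sum>l\<in>UNIV. (A t $ i $ l + (if l = i then \<alpha> else 0)) * (x $ l - z $ l))
      = (\<Sum>l\<in>UNIV. A t $ i $ l * (x $ l - z $ l)) + (\<Sum>l\<in>UNIV. (if l = i then \<alpha> * (x $ l - z $ l) else 0))"
    unfolding sum.distrib[symmetric] by (rule sum.cong) (auto simp: algebra_simps)
  have e2: "(\<Sum>l\<in>UNIV. (if l = i then \<alpha> * (x $ l - z $ l) else 0)) = \<alpha> * (x $ i - z $ i)"
    by simp
  have eq: "(A t *v x + \<alpha> *\<^sub>R x) $ i - (A t *v z + \<alpha> *\<^sub>R z) $ i
      = (\<Sum>l\<in>UNIV. (A t $ i $ l + (if l = i then \<alpha> else 0)) * (x $ l - z $ l))"
    unfolding e1 e2 by (simp add: matrix_vector_mult_def algebra_simps sum_subtractf)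
  have "0 \<le> (\<Sum>l\<in>UNIV. (A t $ i $ l + (if l = i then \<alpha> else 0)) * (x $ l - z $ l))"
  proof (intro sum_nonneg mult_nonneg_nonneg)
    fix l show "0 \<le> A t $ i $ l + (if l = i then \<alpha> else 0)"
      using metzA[of t] bndA[of t i l] unfolding metzler_def by (cases "l = i") auto
    show "0 \<le> x $ l - z $ l" using assms[of l] by simp
  qed
  with eq show ?thesis by linarith
qed

lemma A_const: "A t *v (\<chi> l. c) = 0"
proof -
  have "\<And>i. (\<Sum>l\<in>UNIV. A t $ i $ l * c) = 0"
    using zrsA[of t] unfolding zero_row_sums_def by (simp add: sum_distrib_right[symmetric])
  then show ?thesis by (simp add: matrix_vector_mult_def vec_eq_iff)
qed

lemma F_const: "(A t *v (\<chi> l. c) + \<alpha> *\<^sub>R (\<chi> l. c)) $ i = \<alpha> * c"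
  by (simp add: A_const)

lemma F_axis:
  assumes "i \<noteq> j"
  shows "(A t *v (c *\<^sub>R axis j 1) + \<alpha> *\<^sub>R (c *\<^sub>R axis j 1)) $ i = A t $ i $ j * c"
  using assms by (simp add: matrix_vector_mult_def axis_def if_distrib if_distribR cong: if_cong)

end

context cons_sys
begin

lemma pos_short:
  assumes ir: "intrep (\<lambda>x. A x *v w x + \<alpha> *\<^sub>R w x) s w"
    and w0: "\<And>i. w s $ i \<ge> 0" and sb: "s \<le> b" and h: "\<alpha> * (b - s) \<le> 1/2"
    and t: "t \<in> {s..b}"
  shows "w t $ i \<ge> 0"
proof -
  have "compact (w ` {s..b})"
    by (rule compact_continuous_image[OF intrep_cont[OF ir]]) simp
  then obtain R where R: "R > 0" "\<And>x. x \<in> {s..b} \<Longrightarrow> norm (w x) \<le> R"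
    using compact_imp_bounded bounded_pos by (metis imageI)
  have lb: "\<forall>x\<in>{s..b}. \<forall>j. w x $ j \<ge> - (R / 2 ^ k)" for k
  proof (induction k)
    case 0
    show ?case
    proof (intro ballI allI)
      fix x j assume "x \<in> {s..b}"
      then have "norm (w x) \<le> R" using R by auto
      moreover have "\<bar>w x $ j\<bar> \<le> norm (w x)" by (rule component_le_norm_cart)
      ultimately show "w x $ j \<ge> - (R / 2 ^ 0)" by simp
    qed
  next
    case (Suc k)
    let ?\<rho> = "R / 2 ^ k"
    show ?case
    proof (intro ballI allI)
      fix x j assume x: "x \<in> {s..b}"
      have I: "((\<lambda>u. (A u *v w u + \<alpha> *\<^sub>R w u) $ j) has_integral (w x $ j - w s $ j)) {s..x}"
        using intrep_comp[OF ir] x by auto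
      have low: "(\<lambda>u. \<alpha> * (- ?\<rho>)) u \<le> (A u *v w u + \<alpha> *\<^sub>R w u) $ j" if u: "u \<in> {s..x}" for u
      proof -
        have "(A u *v (\<chi> l. - ?\<rho>) + \<alpha> *\<^sub>R (\<chi> l. - ?\<rho>)) $ j \<le> (A u *v w u + \<alpha> *\<^sub>R w u) $ j"
          by (rule F_mono) (use Suc u x in auto)
        then show ?thesis by (simp only: F_const)
      qed
      have "Henstock_Kurzweil_Integration.content {s..x} *\<^sub>R (\<alpha> * (- ?\<rho>)) \<le> w x $ j - w s $ j"
        by (rule has_integral_le[OF has_integral_const_real I low]) 
      then have "(x - s) * (\<alpha> * (- ?\<rho>)) \<le> w x $ j - w s $ j" using x by simp
      moreover have "(x - s) * \<alpha> \<le> 1/2" 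
      proof -
        have "(x - s) * \<alpha> \<le> (b - s) * \<alpha>" using x apos by (intro mult_right_mono) auto
        then show ?thesis using h by (simp add: mult.commute)
      qed
      moreover have "?\<rho> \<ge> 0" using R by simp
      ultimately have "w x $ j \<ge> w s $ j - ?\<rho> / 2"
      proof -
        have "(x - s) * \<alpha> * ?\<rho> \<le> 1/2 * ?\<rho>"
          by (rule mult_right_mono) fact+
        then have "(x - s) * (\<alpha> * (- ?\<rho>)) \<ge> - ?\<rho> / 2" by (simp add: algebra_simps)
        with \<open>(x - s) * (\<alpha> * (- ?\<rho>)) \<le> w x $ j - w s $ j\<close> show ?thesis by linarith
      qed
      then show "w x $ j \<ge> - (R / 2 ^ Suc k)" using w0[of j] by simp
    qed
  qed
  show ?thesis
  proof (rule ccontr)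
    assume "\<not> w t $ i \<ge> 0"
    then have neg: "- w t $ i > 0" by simp
    obtain k where k: "(1/2::real) ^ k < - w t $ i / R"
      using real_arch_pow_inv[of "- w t $ i / R" "1/2"] neg R by (auto simp: divide_neg_pos)
    have "R / 2 ^ k < - w t $ i" using k R by (simp add: field_simps power_one_over)
    moreover have "- (R / 2 ^ k) \<le> w t $ i" using lb[of k] t by blast
    ultimately show False by linarith
  qed
qed

end

context cons_sys
begin

lemma pos_all:
  assumes ir: "intrep (\<lambda>x. A x *v w x + \<alpha> *\<^sub>R w x) s w"
    and w0: "\<And>i. w s $ i \<ge> 0" and t: "s \<le> t"
  shows "w t $ i \<ge> 0"
proof -
  define h where "h = 1 / (2 * \<alpha>)"
  have hpos: "h > 0" using apos by (simp add: h_def)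
  have ah: "\<alpha> * h = 1/2" using apos by (simp add: h_def)
  have claim: "\<forall>t. s \<le> t \<and> t \<le> s + real k * h \<longrightarrow> (\<forall>i. w t $ i \<ge> 0)" for k
  proof (induction k)
    case 0
    then show ?case using w0 by auto
  next
    case (Suc k)
    show ?case
    proof (intro allI impI)
      fix t i assume t: "s \<le> t \<and> t \<le> s + real (Suc k) * h"
      show "w t $ i \<ge> 0"
      proof (cases "t \<le> s + real k * h")
        case True then show ?thesis using Suc t by auto
      next
        case False
        let ?s' = "s + real k * h"
        have s': "s \<le> ?s'" using hpos by simp
        have ir': "intrep (\<lambda>x. A x *v w x + \<alpha> *\<^sub>R w x) ?s' w" by (rule intrep_shift[OF ir s'])
        have w0': "\<And>i. w ?s' $ i \<ge> 0" using Suc s' by auto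
        show ?thesis
        proof (rule pos_short[OF ir' w0', of "?s' + h"])
          show "?s' \<le> ?s' + h" using hpos by simp
          show "\<alpha> * (?s' + h - ?s') \<le> 1/2" using ah by simp
          show "t \<in> {?s'..?s' + h}" using False t by (auto simp: algebra_simps)
        qed
      qed
    qed
  qed
  obtain k :: nat where k: "(t - s) / h \<le> real k" using real_arch_simple by blast
  have "t \<le> s + real k * h" using k hpos by (simp add: field_simps)
  then show ?thesis using claim[of k] t by auto
qed

lemma w_mono:
  assumes ir: "intrep (\<lambda>x. A x *v w x + \<alpha> *\<^sub>R w x) s w"
    and w0: "\<And>i. w s $ i \<ge> 0" and st: "s \<le> u" "u \<le> t"
  shows "w u $ i \<le> w t $ i"
proof -
  have ir': "intrep (\<lambda>x. A x *v w x + \<alpha> *\<^sub>R w x) u w" by (rule intrep_shift[OF ir st(1)])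
  have I: "((\<lambda>x. (A x *v w x + \<alpha> *\<^sub>R w x) $ i) has_integral (w t $ i - w u $ i)) {u..t}"
    using intrep_comp[OF ir' st(2)] .
  have "0 \<le> w t $ i - w u $ i"
  proof (rule has_integral_nonneg[OF I])
    fix x assume x: "x \<in> {u..t}"
    have "(A x *v 0 + \<alpha> *\<^sub>R 0) $ i \<le> (A x *v w x + \<alpha> *\<^sub>R w x) $ i"
      by (rule F_mono) (use pos_all[OF ir w0] x st in auto)
    then show "0 \<le> (A x *v w x + \<alpha> *\<^sub>R w x) $ i" by simp
  qed
  then show ?thesis by simp
qed

lemma w_push:
  assumes ir: "intrep (\<lambda>x. A x *v w x + \<alpha> *\<^sub>R w x) s w"
    and w0: "\<And>i. w s $ i \<ge> 0" and st: "s \<le> t" and ij: "i \<noteq> j"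
    and Ai: "(\<lambda>x. A x $ i $ j) integrable_on {s..t}"
  shows "w t $ i \<ge> w s $ j * integral {s..t} (\<lambda>x. A x $ i $ j)"
proof -
  have I: "((\<lambda>x. (A x *v w x + \<alpha> *\<^sub>R w x) $ i) has_integral (w t $ i - w s $ i)) {s..t}"
    using intrep_comp[OF ir st] .
  have I2: "((\<lambda>x. A x $ i $ j * w s $ j) has_integral (integral {s..t} (\<lambda>x. A x $ i $ j) * w s $ j)) {s..t}"
    using has_integral_mult_left[OF integrable_integral[OF Ai]] .
  have "integral {s..t} (\<lambda>x. A x $ i $ j) * w s $ j \<le> w t $ i - w s $ i"
  proof (rule has_integral_le[OF I2 I])
    fix x assume x: "x \<in> {s..t}"
    have "(A x *v (w s $ j *\<^sub>R axis j 1) + \<alpha> *\<^sub>R (w s $ j *\<^sub>R axis j 1)) $ i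
        \<le> (A x *v w x + \<alpha> *\<^sub>R w x) $ i"
    proof (rule F_mono)
      fix l show "(w s $ j *\<^sub>R axis j 1) $ l \<le> w x $ l"
      proof (cases "l = j")
        case True then show ?thesis using w_mono[OF ir w0, of s x j] x by (auto simp: axis_def)
      next
        case False then show ?thesis using pos_all[OF ir w0, of x l] x by (auto simp: axis_def)
      qed
    qed
    then show "A x $ i $ j * w s $ j \<le> (A x *v w x + \<alpha> *\<^sub>R w x) $ i"
      by (simp only: F_axis[OF ij])
  qed
  then show ?thesis using w0[of i] by (simp add: mult.commute)
qed

end

lemma sol_intrep: "is_solution A s y = intrep (\<lambda>x. A x *v y x) s y"
  by (simp add: is_solution_def intrep_def)

context cons_sys
begin

lemma y_facts:
  assumes pc: "piecewise_continuous A" and sol: "is_solution A s y"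
    and y0: "\<And>i. y s $ i \<ge> 0" and st: "s \<le> t"
  shows "y t $ i \<ge> 0" "y t $ i \<ge> exp (- \<alpha> * (t - s)) * y s $ i"
    "i \<noteq> j \<Longrightarrow> (\<lambda>x. A x $ i $ j) integrable_on {s..t} \<Longrightarrow>
      y t $ i \<ge> exp (- \<alpha> * (t - s)) * (y s $ j * integral {s..t} (\<lambda>x. A x $ i $ j))"
proof -
  define w where "w = (\<lambda>x. exp (\<alpha> * (x - s)) *\<^sub>R y x)"
  have ir: "intrep (\<lambda>x. A x *v w x + \<alpha> *\<^sub>R w x) s w"
    unfolding w_def by (rule intrep_exp[OF pc sol[unfolded sol_intrep]])
  have ws: "w s = y s" by (simp add: w_def)
  have w0: "\<And>i. w s $ i \<ge> 0" using y0 ws by simp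
  have wt: "w t $ l = exp (\<alpha> * (t - s)) * y t $ l" for l by (simp add: w_def)
  have e: "exp (- \<alpha> * (t - s)) * exp (\<alpha> * (t - s)) = 1" by (simp add: exp_add[symmetric])
  have yt: "y t $ l = exp (- \<alpha> * (t - s)) * w t $ l" for l
    using e by (simp add: wt mult.assoc[symmetric])
  show "y t $ i \<ge> 0" unfolding yt using pos_all[OF ir w0 st, of i] by simp
  show "y t $ i \<ge> exp (- \<alpha> * (t - s)) * y s $ i"
    unfolding yt using w_mono[OF ir w0 order_refl st, of i] ws by (simp add: mult_left_mono)
  assume ij: "i \<noteq> j" and Ai: "(\<lambda>x. A x $ i $ j) integrable_on {s..t}"
  show "y t $ i \<ge> exp (- \<alpha> * (t - s)) * (y s $ j * integral {s..t} (\<lambda>x. A x $ i $ j))"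
    unfolding yt using w_push[OF ir w0 st ij Ai] ws by (simp add: mult_left_mono)
qed

end

lemma sol_shift: "is_solution A t0 y \<Longrightarrow> t0 \<le> s \<Longrightarrow> is_solution A s y"
  unfolding sol_intrep by (rule intrep_shift)

lemma trancl_cross:
  assumes "(a, b) \<in> G\<^sup>+" "a \<in> S" "b \<notin> S"
  shows "\<exists>x y. (x, y) \<in> G \<and> x \<in> S \<and> y \<notin> S"
  using assms
proof (induction rule: trancl_induct)
  case (base y) then show ?case by blast
next
  case (step y z)
  then show ?case by (cases "y \<in> S") auto
qed

lemma bl_entry: "bounded_linear (\<lambda>M::real^'n^'m. M $ q $ p)"
  by (rule bounded_linear_compose[OF bounded_linear_vec_nth bounded_linear_vec_nth])

context cons_sys
begin

lemma sol_cminus: "is_solution A s y \<Longrightarrow> is_solution A s (\<lambda>x. (\<chi> l. c) - y x)"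
  unfolding is_solution_def
proof (intro allI impI)
  fix t assume "\<forall>t\<ge>s. ((\<lambda>x. A x *v y x) has_integral y t - y s) {s..t}" "s \<le> t"
  then have "((\<lambda>x. A x *v y x) has_integral y t - y s) {s..t}" by auto
  from has_integral_neg[OF this]
  show "((\<lambda>x. A x *v ((\<chi> l. c) - y x)) has_integral ((\<chi> l. c) - y t) - ((\<chi> l. c) - y s)) {s..t}"
    by (simp add: matrix_vector_mult_diff_distrib A_const)
qed

lemma sol_minusc: "is_solution A s y \<Longrightarrow> is_solution A s (\<lambda>x. y x - (\<chi> l. c))"
  unfolding is_solution_def
  by (simp add: matrix_vector_mult_diff_distrib A_const)

lemma contraction:
  assumes pc: "piecewise_continuous A" and sol: "is_solution A t y"
    and y0: "\<And>i. y t $ i \<ge> 0" and yk: "y t $ k \<ge> \<eta>" and eta: "\<eta> \<ge> 0"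
    and dT: "\<delta> > 0" "T > 0"
    and reach: "\<And>u l. l \<noteq> k \<Longrightarrow> reachable (delta_digraph (integral {u..u+T} A) \<delta>) k l"
  shows "y (t + real CARD('n) * T) $ i \<ge> (exp (- \<alpha> * T) * min 1 \<delta>) ^ CARD('n) * \<eta>"
proof -
  define \<gamma> where "\<gamma> = exp (- \<alpha> * T) * min 1 \<delta>"
  have g0: "\<gamma> \<ge> 0" using dT by (simp add: \<gamma>_def)
  have g1: "\<gamma> \<le> exp (- \<alpha> * T)" unfolding \<gamma>_def by (simp add: mult_left_le)
  have g2: "\<gamma> \<le> exp (- \<alpha> * T) * \<delta>" unfolding \<gamma>_def by (simp add: mult_left_mono)
  have claim: "\<exists>S. k \<in> S \<and> min (j+1) CARD('n) \<le> card S \<and>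
                  (\<forall>i\<in>S. y (t + real j * T) $ i \<ge> \<gamma> ^ j * \<eta>)" for j
  proof (induction j)
    case 0
    show ?case by (rule exI[of _ "{k}"]) (use yk in auto)
  next
    case (Suc j)
    then obtain S where S: "k \<in> S" "min (j+1) CARD('n) \<le> card S"
      "\<forall>i\<in>S. y (t + real j * T) $ i \<ge> \<gamma> ^ j * \<eta>" by blast
    define u where "u = t + real j * T"
    have tu: "t \<le> u" using dT by (simp add: u_def)
    have uT: "t + real (Suc j) * T = u + T" by (simp add: u_def algebra_simps)
    have solu: "is_solution A u y" by (rule sol_shift[OF sol tu])
    have yu0: "\<And>i. y u $ i \<ge> 0" using y_facts(1)[OF pc sol y0 tu] .
    have ge0: "\<gamma> ^ j * \<eta> \<ge> 0" using g0 eta by simp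
    have keep: "y (u + T) $ i \<ge> \<gamma> ^ Suc j * \<eta>" if i: "i \<in> S" for i
    proof -
      have "y (u + T) $ i \<ge> exp (- \<alpha> * (u + T - u)) * y u $ i"
        by (rule y_facts(2)[OF pc solu yu0]) (use dT in simp)
      then have "y (u + T) $ i \<ge> exp (- \<alpha> * T) * y u $ i" by simp
      moreover have "exp (- \<alpha> * T) * y u $ i \<ge> exp (- \<alpha> * T) * (\<gamma> ^ j * \<eta>)"
        by (rule mult_left_mono) (use S(3) i in \<open>auto simp: u_def\<close>)
      moreover have "exp (- \<alpha> * T) * (\<gamma> ^ j * \<eta>) \<ge> \<gamma> * (\<gamma> ^ j * \<eta>)"
        by (rule mult_right_mono[OF g1 ge0])
      ultimately have "y (u + T) $ i \<ge> \<gamma> * (\<gamma> ^ j * \<eta>)" by linarith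
      then show ?thesis by (simp add: mult.assoc)
    qed
    show ?case
    proof (cases "S = UNIV")
      case True
      show ?thesis
      proof (rule exI[of _ S], intro conjI)
        show "k \<in> S" using S(1) .
        show "min (Suc j + 1) CARD('n) \<le> card S" using True by simp
        show "\<forall>i\<in>S. \<gamma> ^ Suc j * \<eta> \<le> y (t + real (Suc j) * T) $ i"
          unfolding uT using keep by blast
      qed
    next
      case False
      then obtain l where l: "l \<notin> S" by blast
      have lk: "l \<noteq> k" using l S(1) by blast
      let ?M = "integral {u..u+T} A"
      have "(k, l) \<in> (delta_digraph ?M \<delta>)\<^sup>+" using reach[OF lk] unfolding reachable_def by blast
      then obtain p q where pq: "(p, q) \<in> delta_digraph ?M \<delta>" "p \<in> S" "q \<notin> S"
        using trancl_cross[OF _ S(1) l] by blast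
      have qp: "q \<noteq> p" "?M $ q $ p > \<delta>" using pq(1) unfolding delta_digraph_def by auto
      have Aint: "A integrable_on {u..u+T}"
      proof (rule ccontr)
        assume "\<not> A integrable_on {u..u+T}"
        then have "?M = 0" by (rule not_integrable_integral)
        with qp dT show False by simp
      qed
      have Aqp: "(\<lambda>x. A x $ q $ p) integrable_on {u..u+T}"
        using integrable_linear[OF Aint bl_entry[of q p]] by (simp add: o_def)
      have Mqp: "integral {u..u+T} (\<lambda>x. A x $ q $ p) = ?M $ q $ p"
        using integral_linear[OF Aint bl_entry[of q p]] by (simp add: o_def)
      have "y (u + T) $ q \<ge> exp (- \<alpha> * (u + T - u)) * (y u $ p * integral {u..u+T} (\<lambda>x. A x $ q $ p))"
        by (rule y_facts(3)[OF pc solu yu0 _ qp(1) Aqp]) (use dT in simp)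
      then have "y (u + T) $ q \<ge> exp (- \<alpha> * T) * (y u $ p * ?M $ q $ p)" by (simp add: Mqp)
      moreover have "y u $ p * ?M $ q $ p \<ge> (\<gamma> ^ j * \<eta>) * \<delta>"
        using S(3) pq(2) qp(2) ge0 dT unfolding u_def
        by (intro mult_mono) auto
      ultimately have "y (u + T) $ q \<ge> exp (- \<alpha> * T) * ((\<gamma> ^ j * \<eta>) * \<delta>)"
      proof -
        have "exp (- \<alpha> * T) * ((\<gamma> ^ j * \<eta>) * \<delta>) \<le> exp (- \<alpha> * T) * (y u $ p * ?M $ q $ p)"
          by (rule mult_left_mono) (fact, simp)
        then show ?thesis using \<open>y (u + T) $ q \<ge> exp (- \<alpha> * T) * (y u $ p * ?M $ q $ p)\<close> by linarith
      qed
      moreover have "exp (- \<alpha> * T) * ((\<gamma> ^ j * \<eta>) * \<delta>) \<ge> \<gamma> * (\<gamma> ^ j * \<eta>)"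
        using mult_right_mono[OF g2 ge0] by (simp add: algebra_simps)
      ultimately have yq: "y (u + T) $ q \<ge> \<gamma> ^ Suc j * \<eta>" by (simp add: mult.assoc)
      show ?thesis
      proof (rule exI[of _ "insert q S"], intro conjI)
        show "k \<in> insert q S" using S(1) by simp
        show "min (Suc j + 1) CARD('n) \<le> card (insert q S)" using S(2) pq(3) by simp
        show "\<forall>i\<in>insert q S. \<gamma> ^ Suc j * \<eta> \<le> y (t + real (Suc j) * T) $ i"
          unfolding uT using keep yq by blast
      qed
    qed
  qed
  obtain S where S: "CARD('n) \<le> card S" "\<forall>i\<in>S. y (t + real CARD('n) * T) $ i \<ge> \<gamma> ^ CARD('n) * \<eta>"
    using claim[of "CARD('n)"] by auto
  have "S = UNIV" using card_seteq[of UNIV S] S(1) by simp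
  then show ?thesis using S(2) unfolding \<gamma>_def by auto
qed

end

definition mxv :: "real^'n \<Rightarrow> real" where "mxv x = Max (range (\<lambda>i. x $ i))"
definition mnv :: "real^'n \<Rightarrow> real" where "mnv x = Min (range (\<lambda>i. x $ i))"
definition osc :: "real^'n \<Rightarrow> real" where "osc x = mxv x - mnv x"

lemma mxv_ge: "x $ i \<le> mxv x" unfolding mxv_def by (rule Max_ge) auto
lemma mnv_le: "mnv x \<le> x $ i" unfolding mnv_def by (rule Min_le) auto
lemma mxv_leI: "(\<And>i. x $ i \<le> c) \<Longrightarrow> mxv x \<le> c" unfolding mxv_def by (subst Max_le_iff) auto
lemma mnv_geI: "(\<And>i. c \<le> x $ i) \<Longrightarrow> c \<le> mnv x" unfolding mnv_def by (subst Min_ge_iff) auto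
lemma mxv_ex: "\<exists>i. x $ i = mxv x"
proof -
  have "Max (range (\<lambda>i. x $ i)) \<in> range (\<lambda>i. x $ i)" by (rule Max_in) auto
  then obtain i where "Max (range (\<lambda>i. x $ i)) = x $ i" by blast
  then show ?thesis unfolding mxv_def by metis
qed
lemma mnv_ex: "\<exists>i. x $ i = mnv x"
proof -
  have "Min (range (\<lambda>i. x $ i)) \<in> range (\<lambda>i. x $ i)" by (rule Min_in) auto
  then obtain i where "Min (range (\<lambda>i. x $ i)) = x $ i" by blast
  then show ?thesis unfolding mnv_def by metis
qed
lemma osc_nonneg: "osc x \<ge> 0"
  using mxv_ge[of x undefined] mnv_le[of x undefined] unfolding osc_def by linarith

lemma infdist_upper: "infdist x consensus_set \<le> real CARD('n) * osc (x::real^'n)"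
proof -
  have mem: "(\<chi> l. mnv x) \<in> consensus_set" by (simp add: consensus_set_def)
  have "infdist x consensus_set \<le> dist x (\<chi> l. mnv x)" by (rule infdist_le[OF mem])
  also have "\<dots> = norm (x - (\<chi> l. mnv x))" by (simp add: dist_norm)
  also have "\<dots> \<le> (\<Sum>i\<in>UNIV. \<bar>(x - (\<chi> l. mnv x)) $ i\<bar>)" by (rule norm_le_l1_cart)
  also have "\<dots> \<le> (\<Sum>i\<in>(UNIV::'n set). osc x)"
  proof (rule sum_mono)
    fix i
    have "\<bar>(x - (\<chi> l. mnv x)) $ i\<bar> = x $ i - mnv x" using mnv_le[of x i] by simp
    also have "\<dots> \<le> osc x" unfolding osc_def using mxv_ge[of x i] by simp
    finally show "\<bar>(x - (\<chi> l. mnv x)) $ i\<bar> \<le> osc x" .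
  qed
  also have "\<dots> = real CARD('n) * osc x" by simp
  finally show ?thesis .
qed

lemma infdist_lower: "osc (x::real^'n) \<le> 2 * infdist x consensus_set"
proof -
  obtain i j where ij: "x $ i = mxv x" "x $ j = mnv x" using mxv_ex mnv_ex by metis
  have ne: "consensus_set \<noteq> ({} :: (real^'n) set)"
  proof -
    have "(\<chi> l. 0) \<in> (consensus_set :: (real^'n) set)" by (simp add: consensus_set_def)
    then show ?thesis by blast
  qed
  have "osc x / 2 \<le> (INF a\<in>consensus_set. dist x a)"
  proof (rule cINF_greatest[OF ne])
    fix a :: "real^'n" assume a: "a \<in> consensus_set"
    then have aij: "a $ i = a $ j" by (simp add: consensus_set_def)
    have "osc x = (x - a) $ i - (x - a) $ j" using ij aij by (simp add: osc_def)
    also have "\<dots> \<le> \<bar>(x - a) $ i\<bar> + \<bar>(x - a) $ j\<bar>" by simp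
    also have "\<dots> \<le> norm (x - a) + norm (x - a)"
      by (intro add_mono component_le_norm_cart)
    finally show "osc x / 2 \<le> dist x a" by (simp add: dist_norm)
  qed
  then show ?thesis using ne by (simp add: infdist_def)
qed

context cons_sys
begin

lemma osc_mono:
  assumes pc: "piecewise_continuous A" and sol: "is_solution A t z" and tt: "t \<le> \<tau>"
  shows "mxv (z \<tau>) \<le> mxv (z t)" "mnv (z t) \<le> mnv (z \<tau>)" "osc (z \<tau>) \<le> osc (z t)"
proof -
  have s1: "is_solution A t (\<lambda>x. (\<chi> l. mxv (z t)) - z x)" by (rule sol_cminus[OF sol])
  have s2: "is_solution A t (\<lambda>x. z x - (\<chi> l. mnv (z t)))" by (rule sol_minusc[OF sol])
  have "0 \<le> ((\<chi> l. mxv (z t)) - z \<tau>) $ i" for i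
    by (rule y_facts(1)[OF pc s1 _ tt]) (simp add: mxv_ge)
  then show m1: "mxv (z \<tau>) \<le> mxv (z t)" by (intro mxv_leI) simp
  have "0 \<le> (z \<tau> - (\<chi> l. mnv (z t))) $ i" for i
    by (rule y_facts(1)[OF pc s2 _ tt]) (simp add: mnv_le)
  then show m2: "mnv (z t) \<le> mnv (z \<tau>)" by (intro mnv_geI) simp
  show "osc (z \<tau>) \<le> osc (z t)" using m1 m2 by (simp add: osc_def)
qed

lemma osc_step:
  assumes pc: "piecewise_continuous A" and sol: "is_solution A t z"
    and dT: "\<delta> > 0" "T > 0"
    and reach: "\<And>u l. l \<noteq> k \<Longrightarrow> reachable (delta_digraph (integral {u..u+T} A) \<delta>) k l"
  shows "osc (z (t + real CARD('n) * T)) \<le> (1 - (exp (- \<alpha> * T) * min 1 \<delta>) ^ CARD('n) / 2) * osc (z t)"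
proof -
  let ?g = "(exp (- \<alpha> * T) * min 1 \<delta>) ^ CARD('n)"
  let ?t = "t + real CARD('n) * T"
  define M where "M = mxv (z t)"
  define m where "m = mnv (z t)"
  define \<eta> where "\<eta> = (M - m) / 2"
  have tt: "t \<le> ?t" using dT by simp
  have eta: "\<eta> \<ge> 0" using osc_nonneg[of "z t"] by (simp add: \<eta>_def M_def m_def osc_def)
  have Mt: "mxv (z ?t) \<le> M" and mt: "m \<le> mnv (z ?t)"
    using osc_mono[OF pc sol tt] by (simp_all add: M_def m_def)
  show ?thesis
  proof (cases "z t $ k \<le> (M + m) / 2")
    case True
    have s1: "is_solution A t (\<lambda>x. (\<chi> l. M) - z x)" by (rule sol_cminus[OF sol])
    have "?g * \<eta> \<le> ((\<chi> l. M) - z ?t) $ i" for i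
      by (rule contraction[OF pc s1 _ _ eta dT reach])
        (use True in \<open>auto simp: M_def mxv_ge \<eta>_def field_simps\<close>)
    then have "mxv (z ?t) \<le> M - ?g * \<eta>" by (intro mxv_leI) (simp add: algebra_simps)
    with mt show ?thesis by (simp add: osc_def \<eta>_def M_def m_def algebra_simps)
  next
    case False
    have s2: "is_solution A t (\<lambda>x. z x - (\<chi> l. m))" by (rule sol_minusc[OF sol])
    have "?g * \<eta> \<le> (z ?t - (\<chi> l. m)) $ i" for i
      by (rule contraction[OF pc s2 _ _ eta dT reach])
        (use False in \<open>auto simp: m_def mnv_le \<eta>_def field_simps\<close>)
    then have "m + ?g * \<eta> \<le> mnv (z ?t)" by (intro mnv_geI) (simp add: algebra_simps)
    with Mt show ?thesis by (simp add: osc_def \<eta>_def M_def m_def algebra_simps)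
  qed
qed

end

lemma mnv_le_mxv: "mnv x \<le> mxv x"
  using mxv_ge[of x undefined] mnv_le[of x undefined] by linarith

theorem theorem1:
  fixes A :: "real \<Rightarrow> real^'n^'n"
  assumes bdd: "bounded (range A)"
    and pc: "piecewise_continuous A"
    and metz: "\<And>t. metzler (A t)"
    and zrs: "\<And>t. zero_row_sums (A t)"
    and conn: "\<exists>(k::'n) \<delta> T. \<delta> > 0 \<and> T > 0 \<and>
       (\<forall>t. \<forall>l. l \<noteq> k \<longrightarrow> reachable (delta_digraph (integral {t..t+T} A) \<delta>) k l)"
  shows "unif_exp_stable A consensus_set \<and>
         (\<forall>t0 \<zeta>. is_solution A t0 \<zeta> \<longrightarrow>
            (\<exists>c. \<forall>i. ((\<lambda>t. \<zeta> t $ i) \<longlongrightarrow> c) at_top))"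
proof -
  obtain B where B: "B > 0" "\<And>x. x \<in> range A \<Longrightarrow> norm x \<le> B"
    using bdd unfolding bounded_pos by blast
  have bnd: "\<bar>A t $ i $ j\<bar> \<le> B" for t i j
  proof -
    have "\<bar>A t $ i $ j\<bar> \<le> norm (A t $ i)" by (rule component_le_norm_cart)
    also have "\<dots> \<le> norm (A t)" unfolding norm_vec_def[of "A t"] by (rule member_le_L2_set) simp_all
    also have "\<dots> \<le> B" using B(2)[of "A t"] by simp
    finally show ?thesis .
  qed
  interpret cons_sys A B
  proof
    show "\<And>t. metzler (A t)" by (rule metz)
    show "\<And>t. zero_row_sums (A t)" by (rule zrs)
    show "\<And>t i j. \<bar>A t $ i $ j\<bar> \<le> B" by (rule bnd)
    show "B > 0" by (rule B(1))
  qed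
  obtain k :: 'n and \<delta> T where dT: "\<delta> > 0" "T > 0"
    and reach: "\<And>u l. l \<noteq> k \<Longrightarrow> reachable (delta_digraph (integral {u..u+T} A) \<delta>) k l"
  proof -
    from conn obtain k :: 'n and \<delta> T where "\<delta> > 0" "T > 0"
      "\<forall>t. \<forall>l. l \<noteq> k \<longrightarrow> reachable (delta_digraph (integral {t..t+T} A) \<delta>) k l"
      by blast
    then show ?thesis using that by blast
  qed
  define g where "g = (exp (- B * T) * min 1 \<delta>) ^ CARD('n)"
  define q where "q = 1 - g / 2"
  define H where "H = real CARD('n) * T"
  define r where "r = - ln q / H"
  have g0: "g > 0" using dT by (simp add: g_def)
  have g1: "g \<le> 1" unfolding g_def
  proof (rule power_le_one)
    show "0 \<le> exp (- B * T) * min 1 \<delta>" using dT by simp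
    have "exp (- B * T) \<le> 1" using B dT by simp
    then show "exp (- B * T) * min 1 \<delta> \<le> 1"
      by (rule mult_le_one) (use dT in auto)
  qed
  have q0: "q > 0" "q < 1" using g0 g1 by (auto simp: q_def)
  have H0: "H > 0" using dT by (simp add: H_def)
  have lnq: "ln q < 0" using q0 by simp
  have r0: "r > 0" using lnq H0 by (simp add: r_def divide_neg_pos)
  have decay: "osc (z t) \<le> (1 / q) * exp (- r * (t - t0)) * osc (z t0)"
    if sol: "is_solution A t0 z" and t: "t \<ge> t0" for z t0 t
  proof -
    have step: "osc (z (t0 + real m * H)) \<le> q ^ m * osc (z t0)" for m
    proof (induction m)
      case 0 then show ?case by simp
    next
      case (Suc m)
      let ?s = "t0 + real m * H"
      have sols: "is_solution A ?s z" by (rule sol_shift[OF sol]) (use H0 in simp)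
      have "osc (z (?s + real CARD('n) * T)) \<le> q * osc (z ?s)"
        using osc_step[OF pc sols dT reach] by (simp add: q_def g_def)
      also have "\<dots> \<le> q * (q ^ m * osc (z t0))" by (rule mult_left_mono[OF Suc]) (use q0 in simp)
      finally show ?case by (simp add: H_def algebra_simps)
    qed
    define m where "m = nat \<lfloor>(t - t0) / H\<rfloor>"
    have m1: "real m \<le> (t - t0) / H" using t H0 by (simp add: m_def)
    have m2: "(t - t0) / H < real m + 1" using t H0 unfolding m_def by linarith
    have tm: "t0 + real m * H \<le> t" using m1 H0 by (simp add: field_simps)
    have solm: "is_solution A (t0 + real m * H) z" by (rule sol_shift[OF sol]) (use H0 in simp)
    have "osc (z t) \<le> osc (z (t0 + real m * H))" by (rule osc_mono(3)[OF pc solm tm])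
    also have "\<dots> \<le> q ^ m * osc (z t0)" by (rule step)
    also have "q ^ m \<le> (1 / q) * exp (- r * (t - t0))"
    proof -
      have "q ^ m = exp (real m * ln q)" using q0 by (simp add: exp_of_nat_mult)
      also have "real m * ln q \<le> ((t - t0) / H - 1) * ln q"
        by (rule mult_right_mono_neg) (use m2 lnq in auto)
      then have "exp (real m * ln q) \<le> exp (((t - t0) / H - 1) * ln q)" by simp
      also have "((t - t0) / H - 1) * ln q = - ln q + (- r * (t - t0))"
        using H0 by (simp add: r_def field_simps)
      also have "exp (- ln q + (- r * (t - t0))) = (1 / q) * exp (- r * (t - t0))"
        using q0 unfolding exp_add by (simp add: exp_minus divide_inverse)
      finally show ?thesis .
    qed
    then have "q ^ m * osc (z t0) \<le> (1 / q) * exp (- r * (t - t0)) * osc (z t0)"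
      by (rule mult_right_mono) (rule osc_nonneg)
    finally show ?thesis .
  qed
  have part1: "unif_exp_stable A consensus_set"
    unfolding unif_exp_stable_def
  proof (rule exI[of _ "2 * real CARD('n) / q"], rule exI[of _ r], intro conjI allI impI)
    show "0 < 2 * real CARD('n) / q" using q0 by simp
    show "0 < r" by (rule r0)
    fix t0 z t assume sol: "is_solution A t0 z" and t: "t0 \<le> t"
    let ?e = "exp (- r * (t - t0))"
    have "infdist (z t) consensus_set \<le> real CARD('n) * osc (z t)" by (rule infdist_upper)
    also have "\<dots> \<le> real CARD('n) * ((1 / q) * ?e * osc (z t0))"
      by (rule mult_left_mono[OF decay[OF sol t]]) simp
    also have "\<dots> \<le> real CARD('n) * ((1 / q) * ?e * (2 * infdist (z t0) consensus_set))"
      by (intro mult_left_mono infdist_lower) (use q0 in auto)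
    also have "\<dots> = 2 * real CARD('n) / q * ?e * infdist (z t0) consensus_set" by simp
    finally show "infdist (z t) consensus_set \<le> 2 * real CARD('n) / q * ?e * infdist (z t0) consensus_set" .
  qed
  have part2: "\<exists>c. \<forall>i. ((\<lambda>t. z t $ i) \<longlongrightarrow> c) at_top" if sol: "is_solution A t0 z" for t0 z
  proof -
    define L where "L = (INF \<tau>\<in>{t0..}. mxv (z \<tau>))"
    have bb: "bdd_below ((\<lambda>\<tau>. mxv (z \<tau>)) ` {t0..})"
    proof (rule bdd_belowI2)
      fix \<tau> assume "\<tau> \<in> {t0..}"
      then have "mnv (z t0) \<le> mnv (z \<tau>)" using osc_mono(2)[OF pc sol] by simp
      then show "mnv (z t0) \<le> mxv (z \<tau>)" using mnv_le_mxv[of "z \<tau>"] by linarith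
    qed
    have Lb: "mnv (z t) \<le> L \<and> L \<le> mxv (z t)" if t: "t \<ge> t0" for t
    proof
      show "L \<le> mxv (z t)" unfolding L_def by (rule cINF_lower[OF bb]) (use t in simp)
      show "mnv (z t) \<le> L" unfolding L_def
      proof (rule cINF_greatest)
        show "{t0..} \<noteq> {}" by simp
        fix \<tau> assume \<tau>: "\<tau> \<in> {t0..}"
        show "mnv (z t) \<le> mxv (z \<tau>)"
        proof (cases "\<tau> \<le> t")
          case True
          have "is_solution A \<tau> z" by (rule sol_shift[OF sol]) (use \<tau> in simp)
          then have "mxv (z t) \<le> mxv (z \<tau>)" using osc_mono(1)[OF pc _ True] by blast
          then show ?thesis using mnv_le_mxv[of "z t"] by linarith
        next
          case False
          have "is_solution A t z" by (rule sol_shift[OF sol t])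
          then have "mnv (z t) \<le> mnv (z \<tau>)" using osc_mono(2)[OF pc] False by simp
          then show ?thesis using mnv_le_mxv[of "z \<tau>"] by linarith
        qed
      qed
    qed
    show ?thesis
    proof (intro exI[of _ L] allI)
      fix i
      let ?K = "(1 / q) * osc (z t0)"
      have lim0: "((\<lambda>t. ?K * exp (- r * (t - t0))) \<longlongrightarrow> 0) at_top"
        using r0 by real_asymp
      have "((\<lambda>t. z t $ i - L) \<longlongrightarrow> 0) at_top"
      proof (rule Lim_null_comparison[OF _ lim0])
        show "\<forall>\<^sub>F t in at_top. norm (z t $ i - L) \<le> ?K * exp (- r * (t - t0))"
          unfolding eventually_at_top_linorder
        proof (intro exI[of _ t0] allI impI)
          fix t assume t: "t \<ge> t0"
          have "norm (z t $ i - L) \<le> osc (z t)"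
            using Lb[OF t] mnv_le[of "z t" i] mxv_ge[of "z t" i] unfolding osc_def by (simp add: abs_le_iff)
          also have "\<dots> \<le> (1 / q) * exp (- r * (t - t0)) * osc (z t0)" by (rule decay[OF sol t])
          finally show "norm (z t $ i - L) \<le> ?K * exp (- r * (t - t0))" by (simp add: algebra_simps)
        qed
      qed
      then show "((\<lambda>t. z t $ i) \<longlongrightarrow> L) at_top" by (simp add: LIM_zero_iff)
    qed
  qed
  show ?thesis using part1 part2 by blast
qed


end
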